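(* For every $n\ge1$ and $k\ge0$, the following identity holds in $\mathbb C[x_1,\dots,x_n]$: $z_{2k}=-\sum_{i=1}^{k}\sigma_{2i}\,z_{2k-2i}+\sigma_{2k+1}$, where $\sigma_p=\sum_{i_1<\dots<i_p}x_{i_1}\cdots x_{i_p}$ is the $p$-th elementary symmetric polynomial ($\sigma_p=0$ for $p>n$).
   Context: $U(\mathfrak h_n)$ is the associative superalgebra generated by odd elements $\xi_1,\dots,\xi_n$ with $\xi_i\xi_j+\xi_j\xi_i=0$ for $i\neq j$; $x_i=\xi_i^2$ are central. Let $T$ be the $\mathbb C[x_1,\dots,x_n]$-linear endomorphism of the free $\mathbb C[x_1,\dots,x_n]$-module with basis $\xi_1,\dots,\xi_n$ given by $T(\xi_j)=\sum_i t_{ij}\xi_i$ with $t_{ii}=0$, $t_{ij}=x_j$ for $i<j$, $t_{ij}=-x_j$ for $i>j$. Put $\phi_0=\sum_i\xi_i$, $\phi_k=T^k(\phi_0)$, and for $k\ge0$ let $z_{2k}=\frac12(\phi_0\phi_{2k}+\phi_{2k}\phi_0)$, which lies in $\mathbb C[x_1,\dots,x_n]$. *)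

theory Defs
  imports Complex_Main "HOL-Library.Poly_Mapping"
begin

text \<open>C[x_1,...,x_n] (indeed C[x_1,x_2,...]) as finitely supported functions from
  monomials (exponent vectors nat =>0 nat) to complex coefficients; this is a comm_ring_1
  with convolution product.\<close>
type_synonym mpoly = "(nat \<Rightarrow>\<^sub>0 nat) \<Rightarrow>\<^sub>0 complex"

definition Xv :: "nat \<Rightarrow> mpoly" where
  "Xv i = Poly_Mapping.single (Poly_Mapping.single i 1) 1"

definition esym :: "nat \<Rightarrow> nat \<Rightarrow> mpoly" where
  "esym n p = (\<Sum>S\<in>{S. S \<subseteq> {1..n} \<and> card S = p}. \<Prod>i\<in>S. Xv i)"

text \<open>Elements of the free C[x]-module with basis xi_1..xi_n, as coefficient functions
  on the index set {1..n}.\<close>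
type_synonym modvec = "nat \<Rightarrow> mpoly"

definition tcoef :: "nat \<Rightarrow> nat \<Rightarrow> mpoly" where
  "tcoef i j = (if i < j then Xv j else if j < i then - Xv j else 0)"

text \<open>T(xi_j) = sum_i t_ij xi_i, extended C[x]-linearly: coefficient of xi_i in T v.\<close>
definition Tmap :: "nat \<Rightarrow> modvec \<Rightarrow> modvec" where
  "Tmap n v = (\<lambda>i. if i \<in> {1..n} then (\<Sum>j=1..n. tcoef i j * v j) else 0)"

definition phi0 :: "nat \<Rightarrow> modvec" where
  "phi0 n = (\<lambda>i. if i \<in> {1..n} then 1 else 0)"

definition phi :: "nat \<Rightarrow> nat \<Rightarrow> modvec" where
  "phi n k = (Tmap n ^^ k) (phi0 n)"

text \<open>For u = sum_i a_i xi_i and v = sum_i b_i xi_i in U(h_n), the defining relations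
  (xi_i xi_j + xi_j xi_i = 0 for i ~= j, xi_i^2 = x_i central) give
  (1/2)(u v + v u) = sum_i a_i b_i x_i.\<close>
definition half_anticomm :: "nat \<Rightarrow> modvec \<Rightarrow> modvec \<Rightarrow> mpoly" where
  "half_anticomm n u v = (\<Sum>i=1..n. u i * v i * Xv i)"

definition zz :: "nat \<Rightarrow> nat \<Rightarrow> mpoly" where
  "zz n m = half_anticomm n (phi n 0) (phi n m)"

end

theory Submission
  imports Defs "HOL-Computational_Algebra.Polynomial"
begin

definition Wf :: "(nat \<Rightarrow> 'a::comm_ring_1) \<Rightarrow> nat \<Rightarrow> nat \<Rightarrow> 'a" where
  "Wf y n i = (\<Prod>j\<in>{1..<i}. 1 - y j) * (\<Prod>j\<in>{i<..n}. 1 + y j)"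

definition cf :: "(nat \<Rightarrow> 'a::comm_ring_1) \<Rightarrow> nat \<Rightarrow> nat \<Rightarrow> 'a" where
  "cf y n i = Wf y n i - (\<Sum>j\<in>{i<..n}. y j * Wf y n j) + (\<Sum>j\<in>{1..<i}. y j * Wf y n j)"

lemma gtAtMost_split: "i < n \<Longrightarrow> {i<..n} = insert (Suc i) {Suc i<..n}"
  by auto

lemma Wf_step:
  assumes "1 \<le> i" "i < n"
  shows "Wf y n i * (1 - y i) = Wf y n (Suc i) * (1 + y (Suc i))"
proof -
  have a: "(\<Prod>j\<in>{1..<Suc i}. 1 - y j) = (\<Prod>j\<in>{1..<i}. 1 - y j) * (1 - y i)"
    using assms by (simp add: prod.atLeastLessThan_Suc)
  have b: "(\<Prod>j\<in>{i<..n}. 1 + y j) = (1 + y (Suc i)) * (\<Prod>j\<in>{Suc i<..n}. 1 + y j)"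
    using assms by (simp add: gtAtMost_split)
  show ?thesis unfolding Wf_def a b by (simp add: algebra_simps)
qed

lemma cf_step:
  assumes "1 \<le> i" "i < n"
  shows "cf y n i = cf y n (Suc i)"
proof -
  have a: "(\<Sum>j\<in>{1..<Suc i}. y j * Wf y n j) = (\<Sum>j\<in>{1..<i}. y j * Wf y n j) + y i * Wf y n i"
    using assms by (simp add: sum.atLeastLessThan_Suc)
  have b: "(\<Sum>j\<in>{i<..n}. y j * Wf y n j) = y (Suc i) * Wf y n (Suc i) + (\<Sum>j\<in>{Suc i<..n}. y j * Wf y n j)"
    using assms by (simp add: gtAtMost_split)
  have c: "Wf y n i - y i * Wf y n i = Wf y n (Suc i) + y (Suc i) * Wf y n (Suc i)"
    using Wf_step[OF assms, of y] by (simp add: algebra_simps)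
  show ?thesis unfolding cf_def a b using c by (simp add: algebra_simps)
qed

lemma cf_const:
  assumes "1 \<le> i" "i \<le> n"
  shows "cf y n i = cf y n 1"
  using assms
proof (induction i)
  case 0 then show ?case by simp
next
  case (Suc i)
  show ?case
  proof (cases "i = 0")
    case True then show ?thesis by simp
  next
    case False
    then have "cf y n i = cf y n 1" using Suc by simp
    moreover have "cf y n i = cf y n (Suc i)" using False Suc.prems by (intro cf_step) auto
    ultimately show ?thesis by simp
  qed
qed

lemma boundary:
  fixes y :: "nat \<Rightarrow> 'a::comm_ring_1"
  assumes "1 \<le> n"
  shows "cf y n 1 + cf y n 1 = (\<Prod>j\<in>{1..n}. 1 + y j) + (\<Prod>j\<in>{1..n}. 1 - y j)"
    and "(\<Sum>j\<in>{1..n}. y j * Wf y n j) + (\<Sum>j\<in>{1..n}. y j * Wf y n j)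
         = (\<Prod>j\<in>{1..n}. 1 + y j) - (\<Prod>j\<in>{1..n}. 1 - y j)"
proof -
  let ?F = "\<Sum>j\<in>{1..n}. y j * Wf y n j"
  have cn: "cf y n n = cf y n 1" using assms by (intro cf_const) auto
  have s1: "(\<Sum>j\<in>{1<..n}. y j * Wf y n j) = ?F - y 1 * Wf y n 1"
  proof -
    have "{1..n} = insert 1 {1<..n}" using assms by auto
    then show ?thesis by simp
  qed
  have s2: "(\<Sum>j\<in>{1..<n}. y j * Wf y n j) = ?F - y n * Wf y n n"
  proof -
    have "{1..n} = insert n {1..<n}" using assms by auto
    then show ?thesis by simp
  qed
  have w1: "Wf y n 1 * (1 + y 1) = (\<Prod>j\<in>{1..n}. 1 + y j)"
  proof -
    have "{1..n} = insert 1 {1<..n}" using assms by auto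
    then show ?thesis by (simp add: Wf_def mult.commute)
  qed
  have wn: "Wf y n n * (1 - y n) = (\<Prod>j\<in>{1..n}. 1 - y j)"
  proof -
    have "{1..n} = insert n {1..<n}" using assms by auto
    then show ?thesis by (simp add: Wf_def mult.commute)
  qed
  have c1: "cf y n 1 = Wf y n 1 - (?F - y 1 * Wf y n 1)"
    unfolding cf_def s1 by simp
  have c2: "cf y n n = Wf y n n + (?F - y n * Wf y n n)"
    unfolding cf_def s2 by simp
  have "cf y n 1 + cf y n 1 = cf y n 1 + cf y n n" using cn by simp
  also have "\<dots> = (Wf y n 1 - (?F - y 1 * Wf y n 1)) + (Wf y n n + (?F - y n * Wf y n n))"
    using c1 c2 by (simp only:)
  also have "\<dots> = Wf y n 1 * (1 + y 1) + Wf y n n * (1 - y n)" by (simp add: algebra_simps)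
  finally show "cf y n 1 + cf y n 1 = (\<Prod>j\<in>{1..n}. 1 + y j) + (\<Prod>j\<in>{1..n}. 1 - y j)"
    using w1 wn by simp
  have "?F + ?F = (Wf y n 1 - (?F - y 1 * Wf y n 1)) + ?F + ?F - cf y n 1"
    using c1 by (simp only:) simp
  also have "\<dots> = (Wf y n 1 - (?F - y 1 * Wf y n 1)) + ?F + ?F - (Wf y n n + (?F - y n * Wf y n n))"
    using c2 cn by (simp only:)
  also have "\<dots> = Wf y n 1 * (1 + y 1) - Wf y n n * (1 - y n)" by (simp add: algebra_simps)
  finally show "?F + ?F = (\<Prod>j\<in>{1..n}. 1 + y j) - (\<Prod>j\<in>{1..n}. 1 - y j)"
    using w1 wn by simp
qed

lemma prod_monom1:
  "finite S \<Longrightarrow> (\<Prod>j\<in>S. monom (a j) 1) = monom (\<Prod>j\<in>S. a j) (card S)"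
  by (induction S rule: finite_induct) (simp_all add: mult_monom)

lemma coeff_prod_lin:
  fixes a :: "nat \<Rightarrow> 'a::comm_ring_1"
  assumes "finite A"
  shows "coeff (\<Prod>j\<in>A. 1 + monom (a j) 1) d = (\<Sum>S\<in>{S. S \<subseteq> A \<and> card S = d}. \<Prod>j\<in>S. a j)"
proof -
  have "(\<Prod>j\<in>A. 1 + monom (a j) 1) = (\<Prod>j\<in>A. monom (a j) 1 + 1)" by (simp add: add.commute)
  also have "\<dots> = (\<Sum>S\<in>Pow A. (\<Prod>j\<in>S. monom (a j) 1) * (\<Prod>j\<in>A-S. 1))"
    using assms by (rule prod_add)
  also have "\<dots> = (\<Sum>S\<in>Pow A. monom (\<Prod>j\<in>S. a j) (card S))"
  proof (intro sum.cong refl)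
    fix S assume "S \<in> Pow A"
    then have "finite S" using assms finite_subset by blast
    then show "(\<Prod>j\<in>S. monom (a j) 1) * (\<Prod>j\<in>A-S. 1) = monom (\<Prod>j\<in>S. a j) (card S)"
      by (simp only: prod_monom1 prod.neutral_const mult_1_right)
  qed
  finally have "coeff (\<Prod>j\<in>A. 1 + monom (a j) 1) d = (\<Sum>S\<in>Pow A. if card S = d then \<Prod>j\<in>S. a j else 0)"
    by (simp add: coeff_sum)
  also have "\<dots> = (\<Sum>S\<in>{S\<in>Pow A. card S = d}. \<Prod>j\<in>S. a j)"
    using assms by (intro sum.inter_filter[symmetric]) simp
  also have "{S\<in>Pow A. card S = d} = {S. S \<subseteq> A \<and> card S = d}" by auto
  finally show ?thesis .
qed

definition yv :: "nat \<Rightarrow> mpoly poly" where "yv j = monom (Xv j) 1"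

lemma coeff_Pp: "coeff (\<Prod>j\<in>{1..n}. 1 + yv j) d = esym n d"
  unfolding yv_def esym_def by (rule coeff_prod_lin) simp

lemma coeff_Pm: "coeff (\<Prod>j\<in>{1..n}. 1 - yv j) d = (-1)^d * esym n d"
proof -
  have "(\<Prod>j\<in>{1..n}. 1 - yv j) = (\<Prod>j\<in>{1..n}. 1 + monom (- Xv j) 1)"
    by (simp add: yv_def minus_monom[symmetric])
  then have "coeff (\<Prod>j\<in>{1..n}. 1 - yv j) d = (\<Sum>S\<in>{S. S \<subseteq> {1..n} \<and> card S = d}. \<Prod>j\<in>S. - Xv j)"
    using coeff_prod_lin[of "{1..n}" "\<lambda>j. - Xv j" d] by simp
  also have "\<dots> = (\<Sum>S\<in>{S. S \<subseteq> {1..n} \<and> card S = d}. (-1)^d * (\<Prod>j\<in>S. Xv j))"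
    by (intro sum.cong refl) (simp add: prod_uminus)
  finally show ?thesis by (simp add: esym_def sum_distrib_left)
qed

lemma mpoly_cancel2:
  fixes a b :: mpoly
  shows "a + a = b + b \<Longrightarrow> a = b"
proof (rule poly_mapping_eqI)
  fix k :: "nat \<Rightarrow>\<^sub>0 nat" assume "a + a = b + b"
  then have "Poly_Mapping.lookup (a + a) k = Poly_Mapping.lookup (b + b) k" by simp
  then have "Poly_Mapping.lookup a k + Poly_Mapping.lookup a k = Poly_Mapping.lookup b k + Poly_Mapping.lookup b k" by (simp only: lookup_add)
  then show "Poly_Mapping.lookup a k = Poly_Mapping.lookup b k" by (simp add: lookup_add)
qed

lemma esym0: "esym n 0 = 1"
proof -
  have "S \<subseteq> {1..n} \<and> card S = 0 \<longleftrightarrow> S = {}" for S :: "nat set"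
  proof
    assume h: "S \<subseteq> {1..n} \<and> card S = 0"
    then have "finite S" using finite_subset by blast
    with h show "S = {}" by simp
  qed simp
  then have "{S. S \<subseteq> {1..n} \<and> card S = 0} = {{}}" by auto
  then show ?thesis by (simp add: esym_def)
qed

lemma coeff_yv_mult: "coeff (yv j * p) (Suc d) = Xv j * coeff p d"
  by (simp add: yv_def coeff_monom_mult)

lemma coeff_W0: "coeff (Wf yv n i) 0 = 1"
  by (simp add: Wf_def poly_0_coeff_0[symmetric] poly_prod yv_def poly_monom)

definition ec :: "nat \<Rightarrow> nat \<Rightarrow> mpoly" where "ec n m = coeff (cf yv n 1) m"

lemma ec_val:
  assumes "1 \<le> n"
  shows "ec n m = (if even m then esym n m else 0)"
proof -
  have "coeff (cf yv n 1 + cf yv n 1) m = coeff ((\<Prod>j\<in>{1..n}. 1 + yv j) + (\<Prod>j\<in>{1..n}. 1 - yv j)) m"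
    using boundary(1)[OF assms, of yv] by simp
  then have h: "ec n m + ec n m = esym n m + (-1)^m * esym n m"
    by (simp only: coeff_add coeff_Pp coeff_Pm ec_def)
  show ?thesis
  proof (cases "even m")
    case True
    with h show ?thesis by (auto intro: mpoly_cancel2)
  next
    case False
    with h have "ec n m + ec n m = 0 + 0" by simp
    with False show ?thesis by (auto dest: mpoly_cancel2)
  qed
qed

lemma Fs_val:
  assumes "1 \<le> n" "even d"
  shows "(\<Sum>j\<in>{1..n}. Xv j * coeff (Wf yv n j) d) = esym n (Suc d)"
proof -
  let ?F = "\<Sum>j\<in>{1..n}. yv j * Wf yv n j"
  have "coeff (?F + ?F) (Suc d) = coeff ((\<Prod>j\<in>{1..n}. 1 + yv j) - (\<Prod>j\<in>{1..n}. 1 - yv j)) (Suc d)"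
    using boundary(2)[OF assms(1), of yv] by simp
  then have "coeff ?F (Suc d) + coeff ?F (Suc d) = esym n (Suc d) - (-1)^(Suc d) * esym n (Suc d)"
    by (simp only: coeff_add coeff_diff coeff_Pp coeff_Pm)
  then have "coeff ?F (Suc d) + coeff ?F (Suc d) = esym n (Suc d) + esym n (Suc d)"
    using assms(2) by simp
  then have "coeff ?F (Suc d) = esym n (Suc d)" by (rule mpoly_cancel2)
  then show ?thesis by (simp add: coeff_sum coeff_yv_mult)
qed

lemma Tmap_split:
  assumes "i \<in> {1..n}"
  shows "(\<Sum>j=1..n. tcoef i j * v j) = (\<Sum>j\<in>{i<..n}. Xv j * v j) - (\<Sum>j\<in>{1..<i}. Xv j * v j)"
proof -
  have e: "{1..n} = {1..<i} \<union> insert i {i<..n}" using assms by auto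
  have "(\<Sum>j=1..n. tcoef i j * v j) = (\<Sum>j\<in>{1..<i}. tcoef i j * v j) + (tcoef i i * v i + (\<Sum>j\<in>{i<..n}. tcoef i j * v j))"
    unfolding e by (subst sum.union_disjoint) auto
  also have "(\<Sum>j\<in>{1..<i}. tcoef i j * v j) = - (\<Sum>j\<in>{1..<i}. Xv j * v j)"
    by (simp add: tcoef_def sum_negf[symmetric])
  also have "(\<Sum>j\<in>{i<..n}. tcoef i j * v j) = (\<Sum>j\<in>{i<..n}. Xv j * v j)"
    by (intro sum.cong refl) (simp add: tcoef_def)
  finally show ?thesis by (simp add: tcoef_def)
qed

definition uu :: "nat \<Rightarrow> nat \<Rightarrow> modvec" where
  "uu n d = (\<lambda>i. if i \<in> {1..n} then coeff (Wf yv n i) d else 0)"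

lemma uu_Suc:
  assumes "1 \<le> n"
  shows "uu n (Suc d) = (\<lambda>i. Tmap n (uu n d) i + ec n (Suc d) * phi0 n i)"
proof
  fix i
  show "uu n (Suc d) i = Tmap n (uu n d) i + ec n (Suc d) * phi0 n i"
  proof (cases "i \<in> {1..n}")
    case False
    have "uu n (Suc d) i = 0" "Tmap n (uu n d) i = 0" "phi0 n i = 0"
      using False by (simp_all only: uu_def Tmap_def phi0_def if_False)
    then show ?thesis by simp
  next
    case True
    have h1: "coeff (cf yv n i) (Suc d) = ec n (Suc d)"
      using True cf_const[of i n yv] by (simp add: ec_def)
    have h2: "coeff (cf yv n i) (Suc d) = coeff (Wf yv n i) (Suc d)
        - (\<Sum>j\<in>{i<..n}. Xv j * coeff (Wf yv n j) d) + (\<Sum>j\<in>{1..<i}. Xv j * coeff (Wf yv n j) d)"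
      by (simp add: cf_def coeff_sum coeff_yv_mult)
    have h3: "Tmap n (uu n d) i = (\<Sum>j\<in>{i<..n}. Xv j * coeff (Wf yv n j) d) - (\<Sum>j\<in>{1..<i}. Xv j * coeff (Wf yv n j) d)"
    proof -
      have "Tmap n (uu n d) i = (\<Sum>j\<in>{i<..n}. Xv j * uu n d j) - (\<Sum>j\<in>{1..<i}. Xv j * uu n d j)"
        using True Tmap_split[OF True, of "uu n d"] by (simp add: Tmap_def)
      also have "(\<Sum>j\<in>{i<..n}. Xv j * uu n d j) = (\<Sum>j\<in>{i<..n}. Xv j * coeff (Wf yv n j) d)"
        using True by (intro sum.cong refl) (auto simp: uu_def)
      also have "(\<Sum>j\<in>{1..<i}. Xv j * uu n d j) = (\<Sum>j\<in>{1..<i}. Xv j * coeff (Wf yv n j) d)"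
        using True by (intro sum.cong refl) (auto simp: uu_def)
      finally show ?thesis .
    qed
    have "coeff (Wf yv n i) (Suc d) = Tmap n (uu n d) i + ec n (Suc d)"
      unfolding h3 h1[symmetric] h2 by (simp add: algebra_simps)
    then show ?thesis using True by (simp add: uu_def phi0_def)
  qed
qed

lemma Tmap_lin:
  "Tmap n (\<lambda>i. \<Sum>l\<in>L. a l * v l i) = (\<lambda>i. \<Sum>l\<in>L. a l * Tmap n (v l) i)"
  by (auto simp: Tmap_def sum_distrib_left intro!: ext sum.swap[THEN trans] sum.cong
      simp: mult.left_commute)

lemma phi_Suc: "phi n (Suc m) = Tmap n (phi n m)"
  by (simp add: phi_def)

lemma uu_formula:
  assumes "1 \<le> n"
  shows "uu n d = (\<lambda>i. \<Sum>l\<le>d. ec n l * phi n (d - l) i)"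
proof (induction d)
  case 0
  show ?case using assms
    by (auto simp: uu_def coeff_W0 ec_val esym0 phi_def phi0_def)
next
  case (Suc d)
  have "uu n (Suc d) = (\<lambda>i. Tmap n (uu n d) i + ec n (Suc d) * phi0 n i)"
    by (rule uu_Suc[OF assms])
  also have "\<dots> = (\<lambda>i. (\<Sum>l\<le>d. ec n l * phi n (Suc d - l) i) + ec n (Suc d) * phi n (Suc d - Suc d) i)"
  proof
    fix i
    have "Tmap n (uu n d) i = (\<Sum>l\<le>d. ec n l * Tmap n (phi n (d - l)) i)"
      unfolding Suc Tmap_lin by simp
    also have "\<dots> = (\<Sum>l\<le>d. ec n l * phi n (Suc d - l) i)"
      by (intro sum.cong refl) (simp add: phi_Suc Suc_diff_le)
    finally show "Tmap n (uu n d) i + ec n (Suc d) * phi0 n i = (\<Sum>l\<le>d. ec n l * phi n (Suc d - l) i) + ec n (Suc d) * phi n (Suc d - Suc d) i"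
      by (simp add: phi_def)
  qed
  also have "\<dots> = (\<lambda>i. \<Sum>l\<le>Suc d. ec n l * phi n (Suc d - l) i)"
    by simp
  finally show ?case .
qed

lemma zz_alt: "zz n m = (\<Sum>j=1..n. Xv j * phi n m j)"
  unfolding zz_def half_anticomm_def
  by (intro sum.cong refl) (simp add: phi_def phi0_def)

lemma even_sum:
  fixes f :: "nat \<Rightarrow> 'a::comm_monoid_add"
  shows "(\<Sum>l\<le>2*k. (if even l then f l else 0)) = (\<Sum>i\<le>k. f (2*i))"
proof (induction k)
  case 0 then show ?case by simp
next
  case (Suc k)
  have "2 * Suc k = Suc (Suc (2*k))" by simp
  then show ?case using Suc by (simp add: add.assoc)
qed

theorem lemma5p4:
  fixes n k :: nat
  assumes "n \<ge> 1"
  shows "zz n (2*k) = - (\<Sum>i=1..k. esym n (2*i) * zz n (2*k - 2*i)) + esym n (2*k+1)"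
proof -
  have "esym n (Suc (2*k)) = (\<Sum>j\<in>{1..n}. Xv j * coeff (Wf yv n j) (2*k))"
    using Fs_val[OF assms, of "2*k"] by simp
  also have "\<dots> = (\<Sum>j\<in>{1..n}. Xv j * (\<Sum>l\<le>2*k. ec n l * phi n (2*k - l) j))"
  proof (intro sum.cong refl)
    fix j assume "j \<in> {1..n}"
    then have "coeff (Wf yv n j) (2*k) = uu n (2*k) j" by (simp add: uu_def)
    then show "Xv j * coeff (Wf yv n j) (2*k) = Xv j * (\<Sum>l\<le>2*k. ec n l * phi n (2*k - l) j)"
      by (simp add: uu_formula[OF assms])
  qed
  also have "\<dots> = (\<Sum>l\<le>2*k. ec n l * zz n (2*k - l))"
    unfolding zz_alt sum_distrib_left by (subst sum.swap) (simp add: mult.left_commute)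
  also have "\<dots> = (\<Sum>l\<le>2*k. (if even l then esym n l * zz n (2*k - l) else 0))"
    by (intro sum.cong refl) (simp add: ec_val[OF assms])
  also have "\<dots> = (\<Sum>i\<le>k. esym n (2*i) * zz n (2*k - 2*i))"
    by (rule even_sum)
  also have "\<dots> = esym n 0 * zz n (2*k - 0) + (\<Sum>i=1..k. esym n (2*i) * zz n (2*k - 2*i))"
  proof -
    have "{..k} = insert 0 {1..k}" by auto
    then show ?thesis by simp
  qed
  finally show ?thesis by (simp add: esym0)
qed

end
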